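(* Let $G$ be a finite group, let $n\ge 1$ and let $m$ be odd. If $G$ is $R_{2^n m}$, then $G$ has at most $m(2^n-1)$ conjugacy classes containing involutions.
   Context: For a finite group $G$, $\overline{G}=G\cup\{\infty\}$, and $K_V$ denotes the complete graph on vertex set $V$. $G$ acts on $\overline{G}$ by right multiplication, with $\infty g=\infty$ for all $g\in G$; for a subgraph $F$ of $K_{\overline{G}}$ and $g\in G$, $Fg$ is the graph obtained by replacing every vertex $v$ by $vg$. A $k$-factor of $K_V$ is a spanning $k$-regular subgraph, and a $k$-factorization is a set of $k$-factors whose edge sets partition the edge set of $K_V$. A $k$-factorization $\mathcal{F}$ of $K_{\overline{G}}$ is $1$-rotational if $Fg\in\mathcal{F}$ for all $F\in\mathcal{F}$ and $g\in G$. A finite group $G$ is called $R_k$ if there exists a $1$-rotational $k$-factorization of $K_{\overline{G}}$. An involution is an element of order $2$. *)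

theory Defs
  imports "HOL-Algebra.Multiplicative_Group"
begin

text \<open>The extended set G-bar = G with infinity: vertices are of type 'a option,
  None plays the role of infinity, Some g the group element g.\<close>

definition Gbar :: "('a, 'b) monoid_scheme \<Rightarrow> 'a option set" where
  "Gbar G = Some ` carrier G \<union> {None}"

definition complete_edges :: "'v set \<Rightarrow> 'v set set" where
  "complete_edges V = {e. e \<subseteq> V \<and> card e = 2}"

definition degree :: "'v set set \<Rightarrow> 'v \<Rightarrow> nat" where
  "degree F v = card {e \<in> F. v \<in> e}"

definition is_k_factor :: "'v set \<Rightarrow> nat \<Rightarrow> 'v set set \<Rightarrow> bool" where
  "is_k_factor V k F \<longleftrightarrow> F \<subseteq> complete_edges V \<and> (\<forall>v\<in>V. degree F v = k)"

definition is_k_factorization :: "'v set \<Rightarrow> nat \<Rightarrow> 'v set set set \<Rightarrow> bool" where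
  "is_k_factorization V k \<F> \<longleftrightarrow>
     (\<forall>F\<in>\<F>. is_k_factor V k F) \<and>
     \<Union>\<F> = complete_edges V \<and>
     (\<forall>F1\<in>\<F>. \<forall>F2\<in>\<F>. F1 \<noteq> F2 \<longrightarrow> F1 \<inter> F2 = {})"

definition ract :: "('a, 'b) monoid_scheme \<Rightarrow> 'a \<Rightarrow> 'a option \<Rightarrow> 'a option" where
  "ract G g v = map_option (\<lambda>x. x \<otimes>\<^bsub>G\<^esub> g) v"

definition graph_act :: "('a, 'b) monoid_scheme \<Rightarrow> 'a option set set \<Rightarrow> 'a \<Rightarrow> 'a option set set" where
  "graph_act G F g = (\<lambda>e. ract G g ` e) ` F"

definition one_rotational :: "('a, 'b) monoid_scheme \<Rightarrow> 'a option set set set \<Rightarrow> bool" where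
  "one_rotational G \<F> \<longleftrightarrow> (\<forall>F\<in>\<F>. \<forall>g\<in>carrier G. graph_act G F g \<in> \<F>)"

definition is_R :: "nat \<Rightarrow> ('a, 'b) monoid_scheme \<Rightarrow> bool" where
  "is_R k G \<longleftrightarrow> (\<exists>\<F>. is_k_factorization (Gbar G) k \<F> \<and> one_rotational G \<F>)"

definition conj_class :: "('a, 'b) monoid_scheme \<Rightarrow> 'a \<Rightarrow> 'a set" where
  "conj_class G x = {inv\<^bsub>G\<^esub> g \<otimes>\<^bsub>G\<^esub> x \<otimes>\<^bsub>G\<^esub> g | g. g \<in> carrier G}"

definition involution_classes :: "('a, 'b) monoid_scheme \<Rightarrow> 'a set set" where
  "involution_classes G = {conj_class G x | x. x \<in> carrier G \<and> group.ord G x = 2}"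

end

theory Submission
  imports Defs "HOL-Algebra.Sylow"
begin


lemma invol_fixpoint:
  assumes "finite X" "\<And>x. x \<in> X \<Longrightarrow> f x \<in> X" "\<And>x. x \<in> X \<Longrightarrow> f (f x) = x" "odd (card X)"
  shows "\<exists>x\<in>X. f x = x"
  using assms
proof (induction "card X" arbitrary: X rule: less_induct)
  case less
  show ?case
  proof (rule ccontr)
    assume nf: "\<not> (\<exists>x\<in>X. f x = x)"
    from less.prems(4) have "X \<noteq> {}" by (metis card.empty odd_card_imp_not_empty)
    then obtain x where x: "x \<in> X" by blast
    define Y where "Y = X - {x, f x}"
    have fx: "f x \<in> X" "f x \<noteq> x" using x less.prems nf by auto
    have c2: "card {x, f x} = 2" using fx by simp
    have sub: "{x, f x} \<subseteq> X" using fx x by simp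
    have "card {x, f x} \<le> card X" using card_mono[OF less.prems(1) sub] .
    moreover have "card Y = card X - card {x, f x}" unfolding Y_def
      using card_Diff_subset[OF _ sub] less.prems(1) by simp
    ultimately have cY: "card Y + 2 = card X" using c2 by simp
    have "\<exists>y\<in>Y. f y = y"
    proof (rule less.hyps)
      show "card Y < card X" using cY by simp
      show "finite Y" using less.prems(1) Y_def by simp
      show "\<And>y. y \<in> Y \<Longrightarrow> f y \<in> Y" unfolding Y_def using less.prems(2,3) x
        by (metis Diff_iff insert_iff singletonD)
      show "\<And>y. y \<in> Y \<Longrightarrow> f (f y) = y" using less.prems(3) Y_def by auto
      show "odd (card Y)" using cY less.prems(4) by presburger
    qed
    then show False using nf Y_def by auto
  qed
qed

lemma (in group) invol_conj_into:
  assumes fin: "finite (carrier G)" and P: "subgroup P G" and odd: "odd (card (rcosets P))"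
    and u: "u \<in> carrier G" "u \<otimes> u = \<one>"
  shows "\<exists>y\<in>carrier G. y \<otimes> u \<otimes> inv y \<in> P"
proof -
  have Psub: "P \<subseteq> carrier G" using P subgroup.subset by blast
  have finR: "finite (rcosets P)"
    using fin rcosets_subset_PowG[OF P] by (meson finite_Pow_iff finite_subset)
  have cl: "C #> u \<in> rcosets P" if "C \<in> rcosets P" for C
  proof -
    from that obtain y where y: "y \<in> carrier G" "C = P #> y" unfolding RCOSETS_def by auto
    then have "C #> u = P #> (y \<otimes> u)" using coset_mult_assoc Psub u by simp
    then show ?thesis using y u by (simp add: rcosetsI Psub)
  qed
  have inv: "(C #> u) #> u = C" if "C \<in> rcosets P" for C
  proof -
    have "C \<subseteq> carrier G" using that rcosets_part_G[OF P] by auto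
    then show ?thesis using coset_mult_assoc u by simp
  qed
  obtain C where C: "C \<in> rcosets P" "C #> u = C"
    using invol_fixpoint[of "rcosets P" "\<lambda>C. C #> u", OF finR cl inv odd] by blast
  from C obtain y where y: "y \<in> carrier G" "C = P #> y" unfolding RCOSETS_def by auto
  have "P #> (y \<otimes> u) = P #> y" using C y coset_mult_assoc Psub u by simp
  moreover have "y \<otimes> u \<in> P #> (y \<otimes> u)" using rcos_self P y u by simp
  ultimately have "y \<otimes> u \<in> P #> y" by simp
  then obtain p where p: "p \<in> P" "y \<otimes> u = p \<otimes> y" unfolding r_coset_def by auto
  have "y \<otimes> u \<otimes> inv y = p" using p y Psub
    by (metis inv_solve_right' m_closed subsetD u(1))
  then have "y \<otimes> u \<otimes> inv y \<in> P" using p(1) by simp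
  then show ?thesis using y by blast
qed



context group begin

lemma ract_in: "v \<in> Gbar G \<Longrightarrow> g \<in> carrier G \<Longrightarrow> ract G g v \<in> Gbar G"
  by (auto simp: Gbar_def ract_def)

lemma ract_mult: "v \<in> Gbar G \<Longrightarrow> g \<in> carrier G \<Longrightarrow> h \<in> carrier G \<Longrightarrow>
   ract G h (ract G g v) = ract G (g \<otimes> h) v"
  by (auto simp: Gbar_def ract_def m_assoc)

lemma ract_one: "v \<in> Gbar G \<Longrightarrow> ract G \<one> v = v"
  by (auto simp: Gbar_def ract_def)

lemma graph_act_mult:
  assumes "F \<subseteq> Pow (Gbar G)" "g \<in> carrier G" "h \<in> carrier G"
  shows "graph_act G (graph_act G F g) h = graph_act G F (g \<otimes> h)"
proof -
  have "\<And>e. e \<in> F \<Longrightarrow> ract G h ` (ract G g ` e) = ract G (g \<otimes> h) ` e"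
  proof -
    fix e assume "e \<in> F"
    then have "e \<subseteq> Gbar G" using assms by auto
    then show "ract G h ` (ract G g ` e) = ract G (g \<otimes> h) ` e"
      unfolding image_image using assms ract_mult by (intro image_cong) auto
  qed
  then show ?thesis unfolding graph_act_def image_image by (rule image_cong[OF refl])
qed

lemma graph_act_one:
  assumes "F \<subseteq> Pow (Gbar G)"
  shows "graph_act G F \<one> = F"
proof -
  have "\<And>e. e \<in> F \<Longrightarrow> ract G \<one> ` e = e"
  proof -
    fix e assume "e \<in> F"
    then have "e \<subseteq> Gbar G" using assms by auto
    then show "ract G \<one> ` e = e" using ract_one by (simp add: subset_iff image_iff)
  qed
  then show ?thesis unfolding graph_act_def by simp
qed

lemma graph_act_mem: "e \<in> F \<Longrightarrow> ract G g ` e \<in> graph_act G F g"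
  by (simp add: graph_act_def)

lemma edge_None:
  assumes "e \<in> complete_edges (Gbar G)" "None \<in> e"
  shows "\<exists>x\<in>carrier G. e = {None, Some x}"
proof -
  have "card e = 2" using assms(1) by (simp add: complete_edges_def)
  then obtain a b where ab: "e = {a, b}" "a \<noteq> b" by (meson card_2_iff)
  have "\<exists>w. e = {None, w} \<and> w \<noteq> None"
  proof (cases "a = None")
    case True then have "e = {None, b}" "b \<noteq> None" using ab by simp_all
    then show ?thesis by blast
  next
    case False
    have "None = a \<or> None = b" using ab assms(2) by simp
    with False have "b = None" by metis
    then have "e = {None, a}" "a \<noteq> None" using ab by (simp_all add: insert_commute)
    then show ?thesis by blast
  qed
  then obtain w where w: "e = {None, w}" "w \<noteq> None" by blast
  then have "w \<in> Gbar G" using assms(1) by (auto simp: complete_edges_def)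
  then show ?thesis using w by (auto simp: Gbar_def)
qed

lemma edge_None_in: "x \<in> carrier G \<Longrightarrow> {None, Some x} \<in> complete_edges (Gbar G)"
  by (auto simp: complete_edges_def Gbar_def)

lemma ract_edge: "x \<in> carrier G \<Longrightarrow> g \<in> carrier G \<Longrightarrow>
  ract G g ` {None, Some x} = {None, Some (x \<otimes> g)}"
  by (simp add: ract_def)

end

locale fact_ctx = group G for G :: "('a, 'b) monoid_scheme" (structure) +
  fixes k :: nat and FF :: "'a option set set set"
  assumes fz: "is_k_factorization (Gbar G) k FF"
    and rot: "one_rotational G FF"
begin

lemma fsub: "F \<in> FF \<Longrightarrow> F \<subseteq> complete_edges (Gbar G)"
  using fz by (auto simp: is_k_factorization_def is_k_factor_def)

lemma fsubP: "F \<in> FF \<Longrightarrow> F \<subseteq> Pow (Gbar G)"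
  using fsub by (auto simp: complete_edges_def)

lemma uniq: "F1 \<in> FF \<Longrightarrow> F2 \<in> FF \<Longrightarrow> e \<in> F1 \<Longrightarrow> e \<in> F2 \<Longrightarrow> F1 = F2"
  using fz unfolding is_k_factorization_def by blast

lemma cover: "e \<in> complete_edges (Gbar G) \<Longrightarrow> \<exists>F\<in>FF. e \<in> F"
  using fz by (auto simp: is_k_factorization_def)

lemma deg: "F \<in> FF \<Longrightarrow> degree F None = k"
  using fz by (auto simp: is_k_factorization_def is_k_factor_def Gbar_def)

lemma act_in: "F \<in> FF \<Longrightarrow> g \<in> carrier G \<Longrightarrow> graph_act G F g \<in> FF"
  using rot by (auto simp: one_rotational_def)

lemma None_edges:
  assumes "F \<in> FF"
  shows "{e \<in> F. None \<in> e} = (\<lambda>x. {None, Some x}) ` {x \<in> carrier G. {None, Some x} \<in> F}"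
proof
  show "{e \<in> F. None \<in> e} \<subseteq> (\<lambda>x. {None, Some x}) ` {x \<in> carrier G. {None, Some x} \<in> F}"
  proof
    fix e assume e: "e \<in> {e \<in> F. None \<in> e}"
    then obtain x where "x \<in> carrier G" "e = {None, Some x}" using fsub[OF assms] edge_None by blast
    then show "e \<in> (\<lambda>x. {None, Some x}) ` {x \<in> carrier G. {None, Some x} \<in> F}" using e by blast
  qed
qed auto

lemma card_N:
  assumes "F \<in> FF"
  shows "card {x \<in> carrier G. {None, Some x} \<in> F} = k"
proof -
  have inj: "inj_on (\<lambda>x. {None, Some x}) {x \<in> carrier G. {None, Some x} \<in> F}"
    by (rule inj_onI) (simp add: doubleton_eq_iff)
  have "k = card {e \<in> F. None \<in> e}" using deg[OF assms] by (simp add: degree_def)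
  also have "\<dots> = card ((\<lambda>x. {None, Some x}) ` {x \<in> carrier G. {None, Some x} \<in> F})"
    using None_edges[OF assms] by simp
  also have "\<dots> = card {x \<in> carrier G. {None, Some x} \<in> F}" by (rule card_image[OF inj])
  finally show ?thesis by simp
qed

lemma exists_None_edge:
  assumes "F \<in> FF" "k \<ge> 1"
  shows "\<exists>y\<in>carrier G. {None, Some y} \<in> F"
proof -
  have "{x \<in> carrier G. {None, Some x} \<in> F} \<noteq> {}" using card_N[OF assms(1)] assms(2)
    by (metis card.empty not_one_le_zero)
  then show ?thesis by blast
qed

end


lemma (in group) inv_cancel1: "x \<in> carrier G \<Longrightarrow> y \<in> carrier G \<Longrightarrow> inv x \<otimes> (x \<otimes> y) = y"
  by (simp add: m_assoc[symmetric])
lemma (in group) inv_cancel2: "x \<in> carrier G \<Longrightarrow> y \<in> carrier G \<Longrightarrow> x \<otimes> (inv x \<otimes> y) = y"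
  by (simp add: m_assoc[symmetric])

lemma (in group) conj_class_conj:
  assumes g: "g \<in> carrier G" and x: "x \<in> carrier G"
  shows "conj_class G (g \<otimes> x \<otimes> inv g) = conj_class G x"
proof
  show "conj_class G (g \<otimes> x \<otimes> inv g) \<subseteq> conj_class G x"
  proof
    fix z assume "z \<in> conj_class G (g \<otimes> x \<otimes> inv g)"
    then obtain h where h: "h \<in> carrier G" "z = inv h \<otimes> (g \<otimes> x \<otimes> inv g) \<otimes> h"
      unfolding conj_class_def by blast
    have "z = inv (inv g \<otimes> h) \<otimes> x \<otimes> (inv g \<otimes> h)"
      using h g x by (simp add: m_assoc inv_mult_group inv_cancel1 inv_cancel2)
    then show "z \<in> conj_class G x" unfolding conj_class_def using h g by blast
  qed
next
  show "conj_class G x \<subseteq> conj_class G (g \<otimes> x \<otimes> inv g)"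
  proof
    fix z assume "z \<in> conj_class G x"
    then obtain h where h: "h \<in> carrier G" "z = inv h \<otimes> x \<otimes> h"
      unfolding conj_class_def by blast
    have "z = inv (g \<otimes> h) \<otimes> (g \<otimes> x \<otimes> inv g) \<otimes> (g \<otimes> h)"
      using h g x by (simp add: m_assoc inv_mult_group inv_cancel1 inv_cancel2)
    then show "z \<in> conj_class G (g \<otimes> x \<otimes> inv g)" unfolding conj_class_def using h g by blast
  qed
qed

context fact_ctx begin

lemma main:
  assumes fin: "finite (carrier G)" and k: "k = 2 ^ n * m" and m: "odd m"
  shows "card (involution_classes G) \<le> 2 ^ n - 1"
proof -
  have "m \<noteq> 0" using m by (metis dvd_0_right)
  then have k1: "k \<ge> 1" using k by simp
  define e0 where "e0 = {None, Some \<one>}"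
  have e0: "e0 \<in> complete_edges (Gbar G)" unfolding e0_def by (rule edge_None_in) simp
  obtain F0 where F0: "F0 \<in> FF" "e0 \<in> F0" using cover[OF e0] by blast
  have F0P: "F0 \<subseteq> Pow (Gbar G)" using fsubP[OF F0(1)] .
  define S where "S = {x \<in> carrier G. {None, Some x} \<in> F0}"
  have cS: "card S = k" unfolding S_def using card_N[OF F0(1)] .
  have stab: "x \<in> S \<longleftrightarrow> graph_act G F0 x = F0" if x: "x \<in> carrier G" for x
  proof
    assume "graph_act G F0 x = F0"
    moreover have "ract G x ` e0 \<in> graph_act G F0 x" using graph_act_mem[OF F0(2)] .
    ultimately show "x \<in> S" using x unfolding S_def e0_def by (simp add: ract_def)
  next
    assume "x \<in> S"
    then have xe: "{None, Some x} \<in> F0" unfolding S_def by simp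
    have "ract G (inv x) ` {None, Some x} \<in> graph_act G F0 (inv x)" using graph_act_mem[OF xe] .
    then have "e0 \<in> graph_act G F0 (inv x)" using x unfolding e0_def by (simp add: ract_def)
    then have eq: "graph_act G F0 (inv x) = F0" using uniq act_in F0 x by (meson inv_closed)
    have "graph_act G F0 x = graph_act G (graph_act G F0 (inv x)) x" using eq by simp
    also have "\<dots> = graph_act G F0 (inv x \<otimes> x)" using graph_act_mult F0P x by simp
    also have "\<dots> = F0" using graph_act_one F0P x by simp
    finally show "graph_act G F0 x = F0" .
  qed
  have Scar: "S \<subseteq> carrier G" unfolding S_def by auto
  have Ssub: "subgroup S G"
  proof (rule subgroupI)
    show "S \<subseteq> carrier G" by (rule Scar)
    show "S \<noteq> {}" using cS k1 by auto
    show "inv a \<in> S" if a: "a \<in> S" for a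
    proof -
      have ac: "a \<in> carrier G" using a Scar by auto
      have "graph_act G F0 (inv a) = graph_act G (graph_act G F0 a) (inv a)" using stab ac a by simp
      also have "\<dots> = F0" using graph_act_mult F0P ac graph_act_one by simp
      finally show ?thesis using stab ac by simp
    qed
    show "a \<otimes> b \<in> S" if a: "a \<in> S" and b: "b \<in> S" for a b
    proof -
      have ac: "a \<in> carrier G" "b \<in> carrier G" using a b Scar by auto
      have "graph_act G F0 (a \<otimes> b) = graph_act G (graph_act G F0 a) b"
        using graph_act_mult F0P ac by simp
      also have "\<dots> = F0" using stab ac a b by simp
      finally show ?thesis using stab ac by simp
    qed
  qed
  define H where "H = G\<lparr>carrier := S\<rparr>"
  have gH: "group H" unfolding H_def using subgroup_imp_group[OF Ssub] .
  have finH: "finite (carrier H)" unfolding H_def using fin Scar finite_subset by auto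
  have ordH: "order H = 2 ^ n * m" unfolding H_def order_def using cS k by simp
  have syl: "sylow H 2 n m"
    using gH finH ordH by (simp add: sylow_eq sylow_axioms_def)
  obtain P where P: "subgroup P H" "card P = 2 ^ n" using sylow.sylow_thm[OF syl] by blast
  have cR: "card (rcosets\<^bsub>H\<^esub> P) = m"
    using group.lagrange[OF gH P(1)] P(2) ordH by simp
  have PS: "P \<subseteq> S" using subgroup.subset[OF P(1)] unfolding H_def by simp
  have oneP: "\<one> \<in> P" using subgroup.one_closed[OF P(1)] unfolding H_def by simp
  have finP: "finite P" using PS Scar fin finite_subset by blast
  have key: "\<exists>w\<in>P - {\<one>}. conj_class G w = conj_class G t"
    if t: "t \<in> carrier G" "group.ord G t = 2" for t
  proof -
    have tt: "t \<otimes> t = \<one>" using pow_ord_eq_1[OF t(1)] t(2) t(1) by (simp add: numeral_2_eq_2)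
    have t1: "t \<noteq> \<one>" using ord_eq_1[OF t(1)] t(2) by simp
    have te: "{Some \<one>, Some t} \<in> complete_edges (Gbar G)"
      using t t1 by (auto simp: complete_edges_def Gbar_def)
    obtain F' where F': "F' \<in> FF" "{Some \<one>, Some t} \<in> F'" using cover[OF te] by blast
    obtain y where y: "y \<in> carrier G" "{None, Some y} \<in> F'" using exists_None_edge[OF F'(1) k1] by blast
    have "ract G y ` e0 \<in> graph_act G F0 y" using graph_act_mem[OF F0(2)] .
    then have "{None, Some y} \<in> graph_act G F0 y" using y unfolding e0_def by (simp add: ract_def)
    then have F'eq: "F' = graph_act G F0 y" using uniq[OF F'(1) act_in[OF F0(1) y(1)] y(2)] by simp
    have "ract G t ` {Some \<one>, Some t} \<in> graph_act G F' t" using graph_act_mem[OF F'(2)] .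
    then have "{Some \<one>, Some t} \<in> graph_act G F' t" using t tt by (auto simp: ract_def insert_commute)
    then have Ft: "graph_act G F' t = F'" using uniq[OF act_in[OF F'(1) t(1)] F'(1)] F'(2) by simp
    define c where "c = y \<otimes> t \<otimes> inv y"
    have cc: "c \<in> carrier G" unfolding c_def using y t by simp
    have "graph_act G F0 c = graph_act G (graph_act G (graph_act G F0 y) t) (inv y)"
      unfolding c_def using graph_act_mult F0P y t act_in F0 fsubP by (simp add: m_assoc)
    also have "\<dots> = graph_act G F0 (y \<otimes> inv y)" using Ft F'eq graph_act_mult F0P y by simp
    also have "\<dots> = F0" using graph_act_one F0P y by simp
    finally have "c \<in> S" using stab cc by simp
    have tt': "t \<otimes> (t \<otimes> inv y) = inv y" using tt y t by (simp add: m_assoc[symmetric])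
    have c2: "c \<otimes> c = \<one>" unfolding c_def using y t tt' by (simp add: m_assoc inv_cancel1)
    obtain z where z: "z \<in> S" "z \<otimes> c \<otimes> inv\<^bsub>H\<^esub> z \<in> P"
      using group.invol_conj_into[OF gH finH P(1) _ _ ] cR m \<open>c \<in> S\<close> c2
      unfolding H_def by auto
    have zc: "z \<in> carrier G" using z Scar by auto
    define w where "w = (z \<otimes> y) \<otimes> t \<otimes> inv (z \<otimes> y)"
    have wP: "w \<in> P" using z zc y t unfolding w_def c_def H_def
      by (simp add: m_inv_consistent[OF Ssub] m_assoc inv_mult_group)
    define gg where "gg = z \<otimes> y"
    have gc: "gg \<in> carrier G" unfolding gg_def using zc y by simp
    have "inv gg \<otimes> w \<otimes> gg = t" unfolding w_def gg_def[symmetric] using gc t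
      by (simp add: m_assoc inv_cancel1)
    then have w1: "w \<noteq> \<one>" using t1 gc by auto
    have "conj_class G w = conj_class G t" unfolding w_def using conj_class_conj zc y t by simp
    then show ?thesis using wP w1 by blast
  qed
  have "involution_classes G \<subseteq> conj_class G ` (P - {\<one>})"
    unfolding involution_classes_def
  proof
    fix C assume "C \<in> {conj_class G x |x. x \<in> carrier G \<and> ord x = 2}"
    then obtain x where x: "x \<in> carrier G" "ord x = 2" "C = conj_class G x" by blast
    obtain w where "w \<in> P - {\<one>}" "conj_class G w = conj_class G x" using key[OF x(1,2)] by blast
    then show "C \<in> conj_class G ` (P - {\<one>})" using x(3) by (metis image_eqI)
  qed
  then have "card (involution_classes G) \<le> card (conj_class G ` (P - {\<one>}))"
    using finP by (intro card_mono) auto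
  also have "\<dots> \<le> card (P - {\<one>})" using finP card_image_le by blast
  also have "\<dots> = 2 ^ n - 1" using P(2) oneP finP by simp
  finally show ?thesis .
qed

end

theorem theorem2p5:
  fixes G :: "('a, 'b) monoid_scheme" and n m :: nat
  assumes "group G" and "finite (carrier G)"
    and "n \<ge> 1" and "odd m"
    and "is_R (2 ^ n * m) G"
  shows "card (involution_classes G) \<le> m * (2 ^ n - 1)"
proof -
  obtain FF where FF: "is_k_factorization (Gbar G) (2 ^ n * m) FF" "one_rotational G FF"
    using assms(5) unfolding is_R_def by blast
  interpret fact_ctx G "2 ^ n * m" FF
    using assms(1) FF by (simp add: fact_ctx_def fact_ctx_axioms_def)
  have "card (involution_classes G) \<le> 2 ^ n - 1"
    using main[OF assms(2) refl assms(4)] .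
  also have "\<dots> \<le> m * (2 ^ n - 1)" using assms(4) by (cases m) auto
  finally show ?thesis .
qed

end
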